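(* Let $G=(V,E,\mathcal{W})$ be a coherent matrix-weighted network as described in the context, and consider the consensus dynamics $\dot{\mathbf{y}}_i=\sum_j w_{ij}(\mathbf{R}_{ij}\mathbf{y}_j-\mathbf{y}_i)$, $i=1,\dots,n$, i.e. $\dot{\mathbf{y}}=-\mathcal{L}\mathbf{y}$ for $\mathbf{y}=(\mathbf{y}_1;\dots;\mathbf{y}_n)$, $\mathbf{y}_i\in\mathbb{R}^{n_d}$, with initial states $\mathbf{y}_i(0)$. Then for each node $v_j$, $\mathbf{y}_j(t)\to\mathbf{y}_j^*$ as $t\to\infty$, where $$\mathbf{y}_j^*=\mathbf{S}_{\sigma(j)1}\,\bar{\mathbf{y}}(0)/n,\qquad \bar{\mathbf{y}}(0)=\sum_{i=1}^n\mathbf{S}_{1\sigma(i)}\mathbf{y}_i(0).$$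
   Context: A matrix-weighted network (MWN) is $G=(V,E,\mathcal{W})$ with node set $V=\{v_1,\dots,v_n\}$ and edge set $E\subset V\times V$, whose underlying graph is connected. For a fixed dimension $n_d$, each ordered pair $(i,j)$ carries $\mathbf{W}_{ij}\in\mathbb{R}^{n_d\times n_d}$, with $\mathbf{W}_{ij}=0$ iff $(v_i,v_j)\notin E$, and $\mathbf{W}_{ij}=\mathbf{W}_{ji}^T$. Write $w_{ij}=\|\mathbf{W}_{ij}\|_2$ and, for edges, $\mathbf{R}_{ij}=\mathbf{W}_{ij}/w_{ij}$ (transformation of the edge; take the term to be zero when $w_{ij}=0$). $\mathcal{W}$ is the $nn_d\times nn_d$ block matrix with blocks $\mathbf{W}_{ij}$; $d_i=\sum_j w_{ij}$, $\mathcal{D}=\mathrm{diag}(d_i)\otimes\mathbf{I}$ ($\mathbf{I}$ the $n_d\times n_d$ identity), $\mathcal{L}=\mathcal{D}-\mathcal{W}$. The transformation of a directed path or cycle with consecutive edges $e_1,\dots,e_k$ is $\mathbf{R}(e_1)\cdots\mathbf{R}(e_k)$; $G$ is coherent if every directed cycle $(v_{i_1},v_{i_2}),\dots,(v_{i_l},v_{i_1})$ ($l\ge2$, distinct nodes) has transformation $\mathbf{I}$. For coherent $G$ there is a partition $\{V_1,\dots,V_{l_p}\}$ of $V$ such that edges inside a part have transformation $\mathbf{I}$, all edges from a part $V_a$ to a part $V_b$ share the same transformation, and every directed cycle of parts (as super nodes) has transformation $\mathbf{I}$. For such a partition, $\sigma(i)$ is the index of the part containing $v_i$, and $\mathbf{S}_{hl}$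 is the transformation of a directed path from a node of $V_h$ to a node of $V_l$. *)

theory Defs
  imports "HOL-Analysis.Analysis"
begin

text \<open>Nodes are indexed 1..n, parts 1..lp. A matrix-weighted network is given by
  the block function W :: nat => nat => real^'d^'d (dimension n_d = CARD('d)).
  The pair (i,j) is an edge iff W i j is nonzero.\<close>

definition wgt :: "(nat \<Rightarrow> nat \<Rightarrow> real^'d^'d) \<Rightarrow> nat \<Rightarrow> nat \<Rightarrow> real" where
  "wgt W i j = onorm (\<lambda>x. W i j *v x)"

definition trf :: "(nat \<Rightarrow> nat \<Rightarrow> real^'d^'d) \<Rightarrow> nat \<Rightarrow> nat \<Rightarrow> real^'d^'d" where
  "trf W i j = (if wgt W i j = 0 then 0 else scaleR (1 / wgt W i j) (W i j))"

fun path_trf :: "(nat \<Rightarrow> nat \<Rightarrow> real^'d^'d) \<Rightarrow> nat list \<Rightarrow> real^'d^'d" where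
  "path_trf W (i # j # rest) = trf W i j ** path_trf W (j # rest)"
| "path_trf W _ = mat 1"

definition edges_trf :: "(nat \<Rightarrow> nat \<Rightarrow> real^'d^'d) \<Rightarrow> (nat \<times> nat) list \<Rightarrow> real^'d^'d" where
  "edges_trf W es = foldr (\<lambda>(u,v) M. trf W u v ** M) es (mat 1)"

definition is_path :: "nat \<Rightarrow> (nat \<Rightarrow> nat \<Rightarrow> real^'d^'d) \<Rightarrow> nat list \<Rightarrow> bool" where
  "is_path n W ps \<longleftrightarrow> ps \<noteq> [] \<and> distinct ps \<and> set ps \<subseteq> {1..n} \<and>
     (\<forall>k < length ps - 1. W (ps ! k) (ps ! Suc k) \<noteq> 0)"

definition mwn :: "nat \<Rightarrow> (nat \<Rightarrow> nat \<Rightarrow> real^'d^'d) \<Rightarrow> bool" where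
  "mwn n W \<longleftrightarrow>
     (\<forall>i j. W i j = transpose (W j i)) \<and>
     (\<forall>i j. i \<notin> {1..n} \<or> j \<notin> {1..n} \<longrightarrow> W i j = 0) \<and>
     (\<forall>i. W i i = 0) \<and>
     (\<forall>i\<in>{1..n}. \<forall>j\<in>{1..n}. (i, j) \<in> {(a, b). W a b \<noteq> 0}\<^sup>*)"

definition coherent :: "nat \<Rightarrow> (nat \<Rightarrow> nat \<Rightarrow> real^'d^'d) \<Rightarrow> bool" where
  "coherent n W \<longleftrightarrow>
     (\<forall>ps. is_path n W ps \<and> length ps \<ge> 2 \<and> W (last ps) (hd ps) \<noteq> 0
        \<longrightarrow> path_trf W (ps @ [hd ps]) = mat 1)"

text \<open>A partition of the nodes into parts 1..lp (sigma i = index of the part of node i)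
  with the three properties from the paper.\<close>
definition coherent_partition ::
  "nat \<Rightarrow> (nat \<Rightarrow> nat \<Rightarrow> real^'d^'d) \<Rightarrow> nat \<Rightarrow> (nat \<Rightarrow> nat) \<Rightarrow> bool" where
  "coherent_partition n W lp \<sigma> \<longleftrightarrow>
     \<sigma> ` {1..n} = {1..lp} \<and>
     (\<forall>i\<in>{1..n}. \<forall>j\<in>{1..n}. W i j \<noteq> 0 \<and> \<sigma> i = \<sigma> j \<longrightarrow> trf W i j = mat 1) \<and>
     (\<forall>i\<in>{1..n}. \<forall>j\<in>{1..n}. \<forall>k\<in>{1..n}. \<forall>l\<in>{1..n}.
        W i j \<noteq> 0 \<and> W k l \<noteq> 0 \<and> \<sigma> i = \<sigma> k \<and> \<sigma> j = \<sigma> l \<longrightarrow> trf W i j = trf W k l) \<and>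
     (\<forall>as es. distinct as \<and> set as \<subseteq> {1..lp} \<and> length as \<ge> 2 \<and> length es = length as \<and>
        (\<forall>k < length as. fst (es ! k) \<in> {1..n} \<and> snd (es ! k) \<in> {1..n} \<and>
           W (fst (es ! k)) (snd (es ! k)) \<noteq> 0 \<and>
           \<sigma> (fst (es ! k)) = as ! k \<and>
           \<sigma> (snd (es ! k)) = as ! (Suc k mod length as))
        \<longrightarrow> edges_trf W es = mat 1)"

definition part_trf ::
  "nat \<Rightarrow> (nat \<Rightarrow> nat \<Rightarrow> real^'d^'d) \<Rightarrow> nat \<Rightarrow> (nat \<Rightarrow> nat) \<Rightarrow> (nat \<Rightarrow> nat \<Rightarrow> real^'d^'d) \<Rightarrow> bool" where
  "part_trf n W lp \<sigma> S \<longleftrightarrow>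
     (\<forall>h\<in>{1..lp}. \<forall>l\<in>{1..lp}. \<forall>ps. is_path n W ps \<and> \<sigma> (hd ps) = h \<and> \<sigma> (last ps) = l
        \<longrightarrow> path_trf W ps = S h l)"

end

theory Submission
  imports Defs
begin
fun wk :: "nat \<Rightarrow> (nat \<Rightarrow> nat \<Rightarrow> real^'d^'d) \<Rightarrow> nat list \<Rightarrow> bool" where
  "wk n W [] = False"
| "wk n W [i] = (i \<in> {1..n})"
| "wk n W (i # j # r) = (i \<in> {1..n} \<and> W i j \<noteq> 0 \<and> wk n W (j # r))"

lemma path_trf_append:
  "path_trf W (p @ y # q) = path_trf W (p @ [y]) ** path_trf W (y # q)"
proof (induction p)
  case Nil then show ?case by simp
next
  case (Cons a p)
  then show ?case by (cases p) (auto simp: matrix_mul_assoc)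
qed
lemma wk_append:
  "wk n W (p @ y # q) \<longleftrightarrow> wk n W (p @ [y]) \<and> wk n W (y # q)"
proof (induction p)
  case Nil then show ?case by (cases q) auto
next
  case (Cons a p)
  show ?case
  proof (cases p)
    case Nil then show ?thesis by (cases q) auto
  next
    case (Cons b p')
    have "wk n W ((a # p) @ y # q) = (a \<in> {1..n} \<and> W a b \<noteq> 0 \<and> wk n W (p @ y # q))"
      using Cons by simp
    also have "\<dots> = (a \<in> {1..n} \<and> W a b \<noteq> 0 \<and> wk n W (p @ [y]) \<and> wk n W (y # q))"
      using Cons.IH by blast
    also have "\<dots> = (wk n W ((a # p) @ [y]) \<and> wk n W (y # q))"
      using Cons by simp
    finally show ?thesis .
  qed
qed

lemma wk_iff:
  "wk n W p \<longleftrightarrow> p \<noteq> [] \<and> set p \<subseteq> {1..n} \<and> (\<forall>k < length p - 1. W (p ! k) (p ! Suc k) \<noteq> 0)"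
proof (induction n W p rule: wk.induct)
  case (3 n W i j r)
  show ?case
    unfolding wk.simps 3 by (auto simp: All_less_Suc2)
qed auto

lemma wk_ne: "wk n W p \<Longrightarrow> p \<noteq> []" by (cases p) auto

lemma wk_hd: "wk n W p \<Longrightarrow> hd p \<in> {1..n}" 
  unfolding wk_iff by (metis hd_in_set subsetD)

lemma wk_last: "wk n W p \<Longrightarrow> last p \<in> {1..n}" 
  unfolding wk_iff by (metis last_in_set subsetD)

lemma wk_snoc:
  assumes "wk n W p" "W (last p) c \<noteq> 0" "c \<in> {1..n}"
  shows "wk n W (p @ [c])"
proof -
  have ne: "p \<noteq> []" using wk_ne[OF assms(1)] .
  then obtain q l where p: "p = q @ [l]" by (metis rev_exhaust)
  have l: "l \<in> {1..n}" using wk_last[OF assms(1)] p by simp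
  have "wk n W (q @ l # [c])"
    unfolding wk_append[of n W q l "[c]"]
    using assms l p by auto
  then show ?thesis using p by simp
qed

lemma wk_rev:
  assumes sym: "\<And>i j. W i j \<noteq> 0 \<Longrightarrow> W j i \<noteq> 0"
  shows "wk n W p \<Longrightarrow> wk n W (rev p)"
proof (induction p rule: induct_list012)
  case (3 i j r)
  have j: "j \<in> {1..n}" using 3(3) wk_hd[of n W "j # r"] by auto
  have "wk n W (rev r @ j # [i])"
    unfolding wk_append[of n W "rev r" j "[i]"]
    using 3 j sym[of i j] by auto
  then show ?case by simp
qed auto

lemma closed_walk:
  assumes coh: "coherent n W" and diag: "\<And>i. W i i = 0"
  shows "wk n W p \<Longrightarrow> hd p = last p \<Longrightarrow> path_trf W p = mat 1"
proof (induction "length p" arbitrary: p rule: less_induct)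
  case less
  have wkp: "wk n W p" and hl: "hd p = last p" by fact+
  obtain q l where p: "p = q @ [l]" using wk_ne[OF wkp] by (metis rev_exhaust)
  show ?case
  proof (cases "q = []")
    case True then show ?thesis using p by simp
  next
    case qne: False
    have hq: "hd q = l" using hl p qne by simp
    show ?thesis
    proof (cases "distinct q")
      case True
      obtain a q' where q: "q = a # q'" using qne by (cases q) auto
      have q'ne: "q' \<noteq> []"
      proof
        assume "q' = []"
        then have "p = [a, l]" "a = l" using p q hq by auto
        then show False using wkp diag by simp
      qed
      have wkI: "p \<noteq> [] \<and> set p \<subseteq> {1..n} \<and> (\<forall>k < length p - 1. W (p ! k) (p ! Suc k) \<noteq> 0)"
        using wkp wk_iff by blast
      have lp: "length p = length q + 1" using p by simp
      have ip: "is_path n W q"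
        unfolding is_path_def
      proof (intro conjI allI impI)
        show "q \<noteq> []" by fact
        show "distinct q" by fact
        show "set q \<subseteq> {1..n}" using wkI p by auto
        fix k assume k: "k < length q - 1"
        have "W (p ! k) (p ! Suc k) \<noteq> 0" using wkI k lp by auto
        moreover have "k < length q" "Suc k < length q" using k by arith+
        ultimately show "W (q ! k) (q ! Suc k) \<noteq> 0" using p by (simp add: nth_append)
      qed
      have "W (p ! (length q - 1)) (p ! Suc (length q - 1)) \<noteq> 0"
      proof -
        have "length q - 1 < length p - 1" using lp qne by simp
        then show ?thesis using wkI by blast
      qed
      moreover have "p ! (length q - 1) = last q" using p qne by (simp add: nth_append last_conv_nth)
      moreover have "p ! Suc (length q - 1) = l" using p qne by (simp add: nth_append)
      ultimately have e: "W (last q) (hd q) \<noteq> 0" using hq by simp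
      have len: "length q \<ge> 2" using q q'ne by (cases q') auto
      have "path_trf W (q @ [hd q]) = mat 1"
        using coh ip len e unfolding coherent_def by blast
      then show ?thesis using p hq by simp
    next
      case False
      then obtain xs ys zs y where q: "q = xs @ [y] @ ys @ [y] @ zs"
        using not_distinct_decomp by blast
      have p2: "p = xs @ y # (ys @ y # (zs @ [l]))" using p q by simp
      have w1: "wk n W (xs @ [y])" and w2': "wk n W (y # (ys @ y # (zs @ [l])))"
        using wkp p2 wk_append by metis+
      have w2: "wk n W ((y # ys) @ y # (zs @ [l]))" using w2' by simp
      have w3: "wk n W ((y # ys) @ [y])" and w4: "wk n W (y # (zs @ [l]))"
        using w2 wk_append by metis+
      have mid: "path_trf W ((y # ys) @ [y]) = mat 1"
        using less(1)[of "(y # ys) @ [y]"] w3 p2 by simp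
      have "path_trf W p = path_trf W (xs @ [y]) ** path_trf W (y # (ys @ y # (zs @ [l])))"
        using p2 path_trf_append by metis
      also have "\<dots> = path_trf W (xs @ [y]) ** path_trf W ((y # ys) @ y # (zs @ [l]))"
        by simp
      also have "\<dots> = path_trf W (xs @ [y]) ** (path_trf W ((y # ys) @ [y]) ** path_trf W (y # (zs @ [l])))"
        using path_trf_append by metis
      also have "\<dots> = path_trf W (xs @ [y]) ** path_trf W (y # (zs @ [l]))"
        using mid by simp
      also have "\<dots> = path_trf W (xs @ y # (zs @ [l]))"
        using path_trf_append by metis
      also have "\<dots> = mat 1"
      proof (rule less(1))
        show "length (xs @ y # zs @ [l]) < length p" using p2 by simp
        show "wk n W (xs @ y # zs @ [l])" using w1 w4 wk_append by metis
        show "hd (xs @ y # zs @ [l]) = last (xs @ y # zs @ [l])"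
          using hl p2 by (cases xs) auto
      qed
      finally show ?thesis .
    qed
  qed
qed

lemma rev_inv:
  assumes coh: "coherent n W" and diag: "\<And>i. W i i = 0"
    and sym: "\<And>i j. W i j \<noteq> 0 \<Longrightarrow> W j i \<noteq> 0"
    and wkp: "wk n W p"
  shows "path_trf W p ** path_trf W (rev p) = mat 1"
proof -
  obtain q b where p: "p = q @ [b]" using wk_ne[OF wkp] by (metis rev_exhaust)
  show ?thesis
  proof (cases "q = []")
    case True then show ?thesis using p by simp
  next
    case False
    have wr: "wk n W (rev p)" using wk_rev[OF sym wkp] by blast
    have rp: "rev p = b # rev q" using p by simp
    have wc: "wk n W (q @ b # rev q)" using wkp wr p rp wk_append by metis
    have "path_trf W (q @ b # rev q) = mat 1"
      using closed_walk[OF coh diag wc] False by (simp add: last_rev)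
    moreover have "path_trf W (q @ b # rev q) = path_trf W p ** path_trf W (rev p)"
      using path_trf_append p rp by metis
    ultimately show ?thesis by simp
  qed
qed

lemma edge_trf:
  assumes coh: "coherent n W" and diag: "\<And>i. W i i = 0"
    and sym: "\<And>i j. W i j \<noteq> 0 \<Longrightarrow> W j i \<noteq> 0"
    and wkp: "wk n W p" and wkq: "wk n W q" and hd: "hd p = hd q"
    and e: "W (last p) j \<noteq> 0" and lq: "last q = j" and j: "j \<in> {1..n}"
  shows "path_trf W p ** trf W (last p) j = path_trf W q"
proof -
  obtain p0 i where p: "p = p0 @ [i]" using wk_ne[OF wkp] by (metis rev_exhaust)
  have qne: "q \<noteq> []" using wk_ne[OF wkq] .
  obtain r where rq: "rev q = j # r" using qne lq
    by (metis hd_rev list.collapse rev_is_Nil_conv)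
  have wr: "wk n W (rev q)" using wk_rev[OF sym wkq] by blast
  have wpj: "wk n W (p @ [j])" using wk_snoc[OF wkp e j] .
  have wc: "wk n W (p @ j # r)" using wpj wr rq wk_append by metis
  have lc: "last (p @ j # r) = hd q"
  proof -
    have "last (p @ j # r) = last (rev q)" using rq by simp
    also have "\<dots> = hd q" using qne by (simp add: last_rev)
    finally show ?thesis .
  qed
  have hc: "hd (p @ j # r) = hd p" using wk_ne[OF wkp] by simp
  have c1: "path_trf W (p @ j # r) = mat 1"
    using closed_walk[OF coh diag wc] lc hc hd by simp
  have c2: "path_trf W (p @ j # r) = path_trf W (p @ [j]) ** path_trf W (rev q)"
    using path_trf_append rq by metis
  have c3: "path_trf W (p @ [j]) = path_trf W p ** trf W (last p) j"
  proof -
    have "path_trf W (p0 @ i # [j]) = path_trf W (p0 @ [i]) ** path_trf W [i, j]"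
      using path_trf_append by metis
    then show ?thesis using p by simp
  qed
  define X where "X = path_trf W p ** trf W (last p) j"
  define Y where "Y = path_trf W (rev q)"
  have XY: "X ** Y = mat 1" using c1 c2 c3 X_def Y_def by simp
  have QY: "path_trf W q ** Y = mat 1" using rev_inv[OF coh diag sym wkq] Y_def by simp
  then have YQ: "Y ** path_trf W q = mat 1" using matrix_left_right_inverse by blast
  have "X = X ** (Y ** path_trf W q)" using YQ by simp
  also have "\<dots> = path_trf W q" using XY by (simp add: matrix_mul_assoc)
  finally show ?thesis using X_def by simp
qed

lemma walk_exists:
  assumes "(i, j) \<in> {(a, b). W a b \<noteq> 0}\<^sup>*" and "i \<in> {1..n}"
    and rng: "\<And>a b. W a b \<noteq> 0 \<Longrightarrow> b \<in> {1..n}"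
  shows "\<exists>p. wk n W p \<and> hd p = i \<and> last p = j"
  using assms(1)
proof (induction rule: rtrancl_induct)
  case base
  then show ?case using assms(2) by (intro exI[of _ "[i]"]) simp
next
  case (step b c)
  then obtain p where p: "wk n W p" "hd p = i" "last p = b" by blast
  have e: "W b c \<noteq> 0" using step by simp
  have "wk n W (p @ [c])" using wk_snoc[of n W p c] p e rng by simp
  then show ?case using p wk_ne[OF p(1)] by (intro exI[of _ "p @ [c]"]) simp
qed

lemma shorten:
  "wk n W p \<Longrightarrow> \<exists>q. wk n W q \<and> distinct q \<and> hd q = hd p \<and> last q = last p"
proof (induction "length p" arbitrary: p rule: less_induct)
  case less
  show ?case
  proof (cases "distinct p")
    case True then show ?thesis using less by blast
  next
    case False
    then obtain xs ys zs y where p: "p = xs @ [y] @ ys @ [y] @ zs"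
      using not_distinct_decomp by blast
    have p2: "p = xs @ y # (ys @ y # zs)" using p by simp
    have w1: "wk n W (xs @ [y])" and w2: "wk n W (y # (ys @ y # zs))"
      using less(2) p2 wk_append by metis+
    have w2': "wk n W ((y # ys) @ y # zs)" using w2 by simp
    have w3: "wk n W (y # zs)" using w2' wk_append by metis
    have w: "wk n W (xs @ y # zs)" using w1 w3 wk_append by metis
    have "length (xs @ y # zs) < length p" using p by simp
    then obtain q where "wk n W q \<and> distinct q \<and> hd q = hd (xs @ y # zs) \<and> last q = last (xs @ y # zs)"
      using less(1) w by blast
    moreover have "hd (xs @ y # zs) = hd p" using p by (cases xs) auto
    moreover have "last (xs @ y # zs) = last p" using p by (cases zs) auto
    ultimately show ?thesis by metis
  qed
qed

lemma is_path_wk: "is_path n W q \<longleftrightarrow> wk n W q \<and> distinct q"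
  unfolding is_path_def wk_iff by auto

lemma onorm_iso:
  fixes f :: "real^'d \<Rightarrow> real^'d"
  assumes bl: "bounded_linear f" and c: "c \<ge> 0" and nf: "\<And>x. norm (f x) = c * norm x"
  shows "onorm f = c"
proof (rule antisym)
  show "onorm f \<le> c" using nf by (intro onorm_le) simp
  obtain k :: 'd where True by blast
  have "norm (f (axis k 1)) / norm (axis k (1::real)) \<le> onorm f" by (rule le_onorm[OF bl])
  then show "c \<le> onorm f" using nf[of "axis k 1"] by simp
qed

lemma wgt_nonneg: "wgt W i j \<ge> 0"
  unfolding wgt_def by (rule onorm_pos_le) simp

lemma wgt_pos: "W i j \<noteq> 0 \<Longrightarrow> wgt W i j > 0"
  unfolding wgt_def
  by (subst onorm_pos_lt) (auto simp: matrix_eq)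

lemma wgt_zero: "W i j = 0 \<Longrightarrow> wgt W i j = 0"
proof -
  assume "W i j = 0"
  then have "(\<lambda>x. W i j *v x) = (\<lambda>x. 0)" by simp
  then show ?thesis unfolding wgt_def by (simp add: onorm_zero)
qed

lemma wgt_sym:
  assumes coh: "coherent n W" and diag: "\<And>i. W i i = 0"
    and Wt: "\<And>i j. W i j = transpose (W j i)"
    and rng: "\<And>a b. W a b \<noteq> 0 \<Longrightarrow> a \<in> {1..n} \<and> b \<in> {1..n}"
  shows "wgt W i j = wgt W j i"
proof (cases "W i j = 0")
  case True
  then have "W j i = 0" using Wt[of j i] by (simp add: transpose_def vec_eq_iff) 
  then show ?thesis using True wgt_zero by metis
next
  case False
  define A where "A = W i j"
  have WjiA: "W j i = transpose A" using Wt[of j i] A_def by simp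
  have t0: "transpose (0::real^'d^'d) = 0" by (simp add: transpose_def vec_eq_iff)
  have Wji: "W j i \<noteq> 0" using False WjiA A_def t0 by (metis transpose_transpose)
  define a where "a = wgt W i j"
  define b where "b = wgt W j i"
  have a: "a > 0" using wgt_pos False a_def by blast
  have b: "b > 0" using wgt_pos Wji b_def by blast
  have ij: "i \<noteq> j" using False diag by auto
  have ip: "is_path n W [i, j]" unfolding is_path_def using ij rng[OF False] False by auto
  have "path_trf W ([i, j] @ [hd [i, j]]) = mat 1"
    using coh ip Wji unfolding coherent_def by fastforce
  then have "trf W i j ** trf W j i = mat 1" by simp
  then have "((1 / a) *\<^sub>R A) ** ((1 / b) *\<^sub>R transpose A) = mat 1"
    unfolding trf_def using a b a_def b_def A_def WjiA by simp
  then have "(1 / (a * b)) *\<^sub>R (A ** transpose A) = mat 1"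
    by (simp add: matrix_scalar_ac scalar_matrix_assoc[symmetric] mult.commute)
  moreover have "A ** transpose A = (a * b) *\<^sub>R ((1 / (a * b)) *\<^sub>R (A ** transpose A))"
    using a b by simp
  ultimately have AA: "A ** transpose A = (a * b) *\<^sub>R mat 1" by simp
  have nx: "norm (transpose A *v x) = sqrt (a * b) * norm x" for x
  proof -
    have "norm (transpose A *v x) ^ 2 = (transpose A *v x) \<bullet> (transpose A *v x)"
      by (simp add: power2_norm_eq_inner)
    also have "\<dots> = x \<bullet> (A *v (transpose A *v x))"
      by (simp add: dot_lmul_matrix)
    also have "\<dots> = x \<bullet> ((a * b) *\<^sub>R x)"
    proof -
      have "A *v (transpose A *v x) = ((a * b) *\<^sub>R mat 1) *v x"
        by (simp only: matrix_vector_mul_assoc AA)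
      also have "\<dots> = (a * b) *\<^sub>R x"
        by (simp only: scaleR_matrix_vector_assoc[symmetric] matrix_vector_mul_lid)
      finally show ?thesis by simp
    qed
    also have "\<dots> = (sqrt (a * b) * norm x) ^ 2"
      using a b by (simp add: power_mult_distrib power2_norm_eq_inner)
    finally have "norm (transpose A *v x) ^ 2 = (sqrt (a * b) * norm x) ^ 2" .
    moreover have "sqrt (a * b) * norm x \<ge> 0" using a b by simp
    ultimately show ?thesis using power2_eq_imp_eq norm_ge_zero by blast
  qed
  have on: "onorm (\<lambda>x. transpose A *v x) = sqrt (a * b)"
    by (rule onorm_iso[OF matrix_vector_mul_bounded_linear _ nx]) (use a b in auto)
  have "b = sqrt (a * b)"
    using on unfolding b_def wgt_def WjiA .
  then have "b * b = sqrt (a * b) * sqrt (a * b)" by simp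
  also have "\<dots> = a * b" using a b by simp
  finally have "b * b = a * b" .
  then have "b = a" using b by simp
  then show ?thesis using a_def b_def by simp
qed

lemma gap:
  fixes x :: "nat \<Rightarrow> real^'d" and a :: "nat \<Rightarrow> nat \<Rightarrow> real"
  assumes n: "n \<ge> 1" and anneg: "\<And>i j. a i j \<ge> 0"
    and conn: "\<And>i k. i \<in> {1..n} \<Longrightarrow> k \<in> {1..n} \<Longrightarrow>
        \<exists>p. wk n W p \<and> distinct p \<and> hd p = i \<and> last p = k"
    and wpos: "wmin > 0" and wle: "\<And>u v. W u v \<noteq> 0 \<Longrightarrow> wmin \<le> a u v"
  shows "(\<Sum>i=1..n. norm (x i - (1 / real n) *\<^sub>R (\<Sum>k=1..n. x k)) ^ 2)
     \<le> (real n ^ 3 / wmin) * (\<Sum>i=1..n. \<Sum>j=1..n. a i j * norm (x j - x i) ^ 2)"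
proof -
  define DD where "DD = (\<Sum>i=1..n. \<Sum>j=1..n. a i j * norm (x j - x i) ^ 2)"
  define mm where "mm = (1 / real n) *\<^sub>R (\<Sum>k=1..n. x k)"
  define s where "s = sqrt (DD / wmin)"
  have DD0: "DD \<ge> 0" unfolding DD_def using anneg by (intro sum_nonneg mult_nonneg_nonneg) auto
  have s0: "s \<ge> 0" unfolding s_def using DD0 wpos by simp
  have e1: "norm (x v - x u) \<le> s" if u: "u \<in> {1..n}" and v: "v \<in> {1..n}" and e: "W u v \<noteq> 0" for u v
  proof -
    have "a u v * norm (x v - x u) ^ 2 \<le> (\<Sum>j=1..n. a u j * norm (x j - x u) ^ 2)"
      using v anneg by (intro member_le_sum) auto
    also have "\<dots> \<le> DD" unfolding DD_def
      using u anneg by (intro member_le_sum[where f = "\<lambda>i. \<Sum>j=1..n. a i j * norm (x j - x i) ^ 2"] sum_nonneg mult_nonneg_nonneg) auto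
    finally have 1: "a u v * norm (x v - x u) ^ 2 \<le> DD" .
    have "wmin * norm (x v - x u) ^ 2 \<le> a u v * norm (x v - x u) ^ 2"
      using wle[OF e] by (intro mult_right_mono) auto
    then have "wmin * norm (x v - x u) ^ 2 \<le> DD" using 1 by linarith
    then have "norm (x v - x u) ^ 2 \<le> DD / wmin" using wpos by (simp add: field_simps)
    then show ?thesis unfolding s_def by (rule real_le_rsqrt)
  qed
  have e2: "wk n W p \<Longrightarrow> norm (x (last p) - x (hd p)) \<le> real (length p - 1) * s" for p
  proof (induction p rule: induct_list012)
    case 1 then show ?case by simp
  next
    case (2 i) then show ?case by simp
  next
    case (3 i j r)
    have w: "wk n W (j # r)" and e: "W i j \<noteq> 0" and i: "i \<in> {1..n}" using 3(3) by auto
    have j: "j \<in> {1..n}" using wk_hd[OF w] by simp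
    have "norm (x (last (j # r)) - x i) \<le> norm (x (last (j # r)) - x j) + norm (x j - x i)"
      using norm_triangle_ineq[of "x (last (j # r)) - x j" "x j - x i"] by simp
    also have "\<dots> \<le> real (length r) * s + s"
      using 3(2)[OF w] e1[OF i j e] by simp
    finally show ?case by (simp add: algebra_simps)
  qed
  have e3: "norm (x k - x i) \<le> real n * s" if i: "i \<in> {1..n}" and k: "k \<in> {1..n}" for i k
  proof -
    obtain p where p: "wk n W p" "distinct p" "hd p = i" "last p = k" using conn[OF i k] by blast
    have "set p \<subseteq> {1..n}" using p(1) wk_iff by blast
    then have "card (set p) \<le> n" using card_mono[of "{1..n}" "set p"] by simp
    then have "length p \<le> n" using distinct_card[OF p(2)] by simp
    then have "real (length p - 1) * s \<le> real n * s" using s0 by (intro mult_right_mono) auto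
    then show ?thesis using e2[OF p(1)] p by simp
  qed
  have e4: "norm (x i - mm) \<le> real n * s" if i: "i \<in> {1..n}" for i
  proof -
    have nn: "real n > 0" using n by simp
    have "x i - mm = (1 / real n) *\<^sub>R (\<Sum>k=1..n. (x i - x k))"
    proof -
      have "(\<Sum>k=1..n. (x i - x k)) = real n *\<^sub>R x i - (\<Sum>k=1..n. x k)"
        by (simp add: sum_subtractf scaleR_conv_of_real)
      then show ?thesis unfolding mm_def using nn by (simp add: scaleR_diff_right)
    qed
    then have "norm (x i - mm) = (1 / real n) * norm (\<Sum>k=1..n. (x i - x k))" using nn by simp
    also have "\<dots> \<le> (1 / real n) * (\<Sum>k=1..n. norm (x i - x k))"
      using nn by (intro mult_left_mono norm_sum) auto
    also have "\<dots> \<le> (1 / real n) * (real n * (real n * s))"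
    proof -
      have "(\<Sum>k=1..n. norm (x i - x k)) \<le> real (card {1..n}) * (real n * s)"
        by (rule sum_bounded_above) (use e3 i in \<open>auto simp: norm_minus_commute\<close>)
      then show ?thesis using nn by (intro mult_left_mono) auto
    qed
    also have "\<dots> = real n * s" using nn by simp
    finally show ?thesis .
  qed
  have e5: "norm (x i - mm) ^ 2 \<le> real n ^ 2 * (DD / wmin)" if i: "i \<in> {1..n}" for i
  proof -
    have "norm (x i - mm) ^ 2 \<le> (real n * s) ^ 2"
      using e4[OF i] by (intro power_mono) auto
    also have "\<dots> = real n ^ 2 * (DD / wmin)"
      unfolding s_def using DD0 wpos by (simp add: power_mult_distrib)
    finally show ?thesis .
  qed
  have "(\<Sum>i=1..n. norm (x i - mm) ^ 2) \<le> real (card {1..n}) * (real n ^ 2 * (DD / wmin))"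
    by (rule sum_bounded_above) (use e5 in auto)
  also have "\<dots> = (real n ^ 3 / wmin) * DD" by (simp add: power3_eq_cube power2_eq_square)
  finally show ?thesis unfolding mm_def DD_def .
qed

lemma exp_decay: "(K::real) > 0 \<Longrightarrow> ((\<lambda>t. exp (- t / K)) \<longlongrightarrow> 0) at_top"
proof -
  assume K: "K > 0"
  have "LIM t at_top. inverse K * t :> at_top"
    by (rule filterlim_tendsto_pos_mult_at_top[OF tendsto_const]) (use K in \<open>auto simp: filterlim_ident\<close>)
  then have "filterlim (\<lambda>t. - (inverse K * t)) at_bot at_top"
    by (simp add: filterlim_uminus_at_bot)
  then have "filterlim (\<lambda>t. - t / K) at_bot at_top"
    by (simp add: divide_inverse mult.commute)
  then show ?thesis using exp_at_bot filterlim_compose by blast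
qed

lemma sum_sym_zero:
  fixes f :: "nat \<Rightarrow> 'b::real_vector"
  assumes sym: "\<And>i j. a i j = a j i"
  shows "(\<Sum>i\<in>I. \<Sum>j\<in>I. a i j *\<^sub>R (f j - f i)) = 0"
proof -
  have "(\<Sum>i\<in>I. \<Sum>j\<in>I. a i j *\<^sub>R f j) = (\<Sum>j\<in>I. \<Sum>i\<in>I. a i j *\<^sub>R f j)"
    by (rule sum.swap)
  also have "\<dots> = (\<Sum>j\<in>I. \<Sum>i\<in>I. a j i *\<^sub>R f j)" using sym by simp
  finally have e: "(\<Sum>i\<in>I. \<Sum>j\<in>I. a i j *\<^sub>R f j) = (\<Sum>i\<in>I. \<Sum>j\<in>I. a i j *\<^sub>R f i)" .
  have "(\<Sum>i\<in>I. \<Sum>j\<in>I. a i j *\<^sub>R (f j - f i))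
      = (\<Sum>i\<in>I. \<Sum>j\<in>I. a i j *\<^sub>R f j) - (\<Sum>i\<in>I. \<Sum>j\<in>I. a i j *\<^sub>R f i)"
    by (simp add: scaleR_diff_right sum_subtractf)
  then show ?thesis using e by simp
qed

lemma energy:
  fixes x :: "nat \<Rightarrow> real^'d"
  assumes sym: "\<And>i j. a i j = a j i"
  shows "2 * (\<Sum>i\<in>I. (x i - m) \<bullet> (\<Sum>j\<in>I. a i j *\<^sub>R (x j - x i)))
     = - (\<Sum>i\<in>I. \<Sum>j\<in>I. a i j * norm (x j - x i) ^ 2)"
proof -
  define X where "X = (\<Sum>i\<in>I. \<Sum>j\<in>I. a i j * ((x i - m) \<bullet> (x j - x i)))"
  have L: "(\<Sum>i\<in>I. (x i - m) \<bullet> (\<Sum>j\<in>I. a i j *\<^sub>R (x j - x i))) = X"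
    unfolding X_def by (simp add: inner_sum_right)
  have "X = (\<Sum>j\<in>I. \<Sum>i\<in>I. a i j * ((x i - m) \<bullet> (x j - x i)))"
    unfolding X_def by (rule sum.swap)
  also have "\<dots> = (\<Sum>i\<in>I. \<Sum>j\<in>I. a i j * ((x j - m) \<bullet> (x i - x j)))"
    using sym by simp
  finally have X2: "X = (\<Sum>i\<in>I. \<Sum>j\<in>I. a i j * ((x j - m) \<bullet> (x i - x j)))" .
  have "X + X = (\<Sum>i\<in>I. \<Sum>j\<in>I. a i j * ((x i - m) \<bullet> (x j - x i) + (x j - m) \<bullet> (x i - x j)))"
    unfolding X_def by (subst X2[unfolded X_def]) (simp add: sum.distrib distrib_left)
  also have "\<dots> = (\<Sum>i\<in>I. \<Sum>j\<in>I. - (a i j * norm (x j - x i) ^ 2))"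
  proof (intro sum.cong refl)
    fix i j
    have "(x i - m) \<bullet> (x j - x i) + (x j - m) \<bullet> (x i - x j) = - ((x j - x i) \<bullet> (x j - x i))"
      by (simp add: inner_diff_left inner_diff_right inner_commute)
    then show "a i j * ((x i - m) \<bullet> (x j - x i) + (x j - m) \<bullet> (x i - x j)) = - (a i j * norm (x j - x i) ^ 2)"
      by (simp add: power2_norm_eq_inner)
  qed
  finally show ?thesis using L by (simp add: sum_negf)
qed

lemma consensus:
  fixes z :: "real \<Rightarrow> nat \<Rightarrow> real^'d" and a :: "nat \<Rightarrow> nat \<Rightarrow> real"
  assumes n: "n \<ge> 1" and anneg: "\<And>i j. a i j \<ge> 0" and asym: "\<And>i j. a i j = a j i"
    and conn: "\<And>i k. i \<in> {1..n} \<Longrightarrow> k \<in> {1..n} \<Longrightarrow>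
        \<exists>p. wk n W p \<and> distinct p \<and> hd p = i \<and> last p = k"
    and wpos: "wmin > 0" and wle: "\<And>u v. W u v \<noteq> 0 \<Longrightarrow> wmin \<le> a u v"
    and der: "\<And>t i. t \<ge> 0 \<Longrightarrow> i \<in> {1..n} \<Longrightarrow> ((\<lambda>s. z s i) has_vector_derivative
            (\<Sum>j=1..n. a i j *\<^sub>R (z t j - z t i))) (at t within {0..})"
  shows "i \<in> {1..n} \<Longrightarrow> ((\<lambda>t. z t i) \<longlongrightarrow> (1 / real n) *\<^sub>R (\<Sum>k=1..n. z 0 k)) at_top"
proof -
  assume i: "i \<in> {1..n}"
  define m where "m = (1 / real n) *\<^sub>R (\<Sum>k=1..n. z 0 k)"
  define zd where "zd t i = (\<Sum>j=1..n. a i j *\<^sub>R (z t j - z t i))" for t i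
  have nn: "real n > 0" using n by simp
  have cons: "(\<Sum>k=1..n. z t k) = (\<Sum>k=1..n. z 0 k)" if t: "t \<ge> 0" for t
  proof -
    have d: "((\<lambda>s. \<Sum>k=1..n. z s k) has_vector_derivative 0) (at s within {0..})" if "s \<in> {0..}" for s
    proof -
      have "((\<lambda>s. \<Sum>k=1..n. z s k) has_vector_derivative (\<Sum>k=1..n. zd s k)) (at s within {0..})"
        using der that unfolding zd_def by (intro has_vector_derivative_sum) auto
      moreover have "(\<Sum>k=1..n. zd s k) = 0" unfolding zd_def by (rule sum_sym_zero[OF asym])
      ultimately show ?thesis by simp
    qed
    obtain c where "\<And>s. s \<in> {0::real..} \<Longrightarrow> (\<Sum>k=1..n. z s k) = c"
      using has_vector_derivative_zero_constant[of "{0..}", OF _ d] by (auto simp: convex_real_interval)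
    then show ?thesis using t by force
  qed
  define V where "V s = (\<Sum>k=1..n. (z s k - m) \<bullet> (z s k - m))" for s
  define D where "D s = (\<Sum>k=1..n. \<Sum>j=1..n. a k j * norm (z s j - z s k) ^ 2)" for s
  define K where "K = real n ^ 3 / wmin"
  have K: "K > 0" unfolding K_def using nn wpos by simp
  have Vder: "(V has_real_derivative (- D t)) (at t within {0..})" if t: "t \<ge> 0" for t
  proof -
    have "(V has_vector_derivative (\<Sum>k=1..n. (z t k - m) \<bullet> zd t k + zd t k \<bullet> (z t k - m))) (at t within {0..})"
      unfolding V_def
    proof (intro has_vector_derivative_sum)
      fix k assume k: "k \<in> {1..n}"
      have dk: "((\<lambda>s. z s k - m) has_vector_derivative zd t k) (at t within {0..})"
        using der[OF t k] unfolding zd_def has_vector_derivative_diff_const .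
      show "((\<lambda>s. (z s k - m) \<bullet> (z s k - m)) has_vector_derivative
          (z t k - m) \<bullet> zd t k + zd t k \<bullet> (z t k - m)) (at t within {0..})"
        using bounded_bilinear.has_vector_derivative[OF bounded_bilinear_inner dk dk] .
    qed
    moreover have "(\<Sum>k=1..n. (z t k - m) \<bullet> zd t k + zd t k \<bullet> (z t k - m)) = - D t"
    proof -
      have "(\<Sum>k=1..n. (z t k - m) \<bullet> zd t k + zd t k \<bullet> (z t k - m))
          = 2 * (\<Sum>k=1..n. (z t k - m) \<bullet> zd t k)"
        by (simp add: inner_commute sum_distrib_left)
      also have "\<dots> = - D t" unfolding zd_def D_def by (rule energy[OF asym])
      finally show ?thesis .
    qed
    ultimately show ?thesis by (simp add: has_real_derivative_iff_has_vector_derivative)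
  qed
  have gapt: "V t \<le> K * D t" if t: "t \<ge> 0" for t
  proof -
    have "m = (1 / real n) *\<^sub>R (\<Sum>k=1..n. z t k)" unfolding m_def using cons[OF t] by simp
    then have "V t = (\<Sum>k=1..n. norm (z t k - (1 / real n) *\<^sub>R (\<Sum>k=1..n. z t k)) ^ 2)"
      unfolding V_def by (simp add: power2_norm_eq_inner)
    also have "\<dots> \<le> K * D t" unfolding K_def D_def
      by (rule gap[OF n anneg conn wpos wle])
    finally show ?thesis .
  qed
  define g where "g s = V s * exp (s / K)" for s
  define g' where "g' s = - D s * exp (s / K) + V s * (exp (s / K) * (1 / K))" for s
  have gder: "(g has_real_derivative g' s) (at s within {0..})" if s: "s \<ge> 0" for s
    unfolding g_def g'_def
    using K by (auto intro!: derivative_eq_intros Vder[OF s])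
  have g'le: "g' s \<le> 0" if s: "s \<ge> 0" for s
  proof -
    have "V s / K \<le> D s" using gapt[OF s] K by (simp add: field_simps)
    then have "exp (s / K) * (V s / K - D s) \<le> 0" by (intro mult_nonneg_nonpos) auto
    then show ?thesis unfolding g'_def by (simp add: algebra_simps)
  qed
  have gdec: "g t \<le> g 0" if t: "t \<ge> 0" for t
  proof -
    have "\<exists>x\<in>{0..t}. g t - g 0 = (\<lambda>h. g' x * h) (t - 0)"
    proof (rule mvt_very_simple[OF t])
      fix x assume x: "0 \<le> x" "x \<le> t"
      have "(g has_real_derivative g' x) (at x within {0..t})"
        using gder[OF x(1)] by (rule DERIV_subset) auto
      then show "(g has_derivative (\<lambda>h. g' x * h)) (at x within {0..t})"
        by (simp add: has_field_derivative_def)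
    qed
    then obtain x where x: "x \<in> {0..t}" "g t - g 0 = g' x * t" by auto
    have "g' x * t \<le> 0" using g'le[of x] x t by (intro mult_nonpos_nonneg) auto
    then show ?thesis using x by simp
  qed
  have Vb: "V t \<le> V 0 * exp (- t / K)" if t: "t \<ge> 0" for t
  proof -
    have "V t * exp (t / K) \<le> V 0" using gdec[OF t] unfolding g_def by simp
    then have "V t \<le> V 0 / exp (t / K)" by (simp add: field_simps)
    then show ?thesis by (simp add: exp_minus divide_inverse)
  qed
  have nb: "norm (z t i - m) \<le> sqrt (V 0 * exp (- t / K))" if t: "t \<ge> 0" for t
  proof -
    have "norm (z t i - m) ^ 2 = (z t i - m) \<bullet> (z t i - m)" by (simp add: power2_norm_eq_inner)
    also have "\<dots> \<le> V t" unfolding V_def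
      using i by (intro member_le_sum[where f = "\<lambda>k. (z t k - m) \<bullet> (z t k - m)"]) auto
    also have "\<dots> \<le> V 0 * exp (- t / K)" by (rule Vb[OF t])
    finally show ?thesis by (rule real_le_rsqrt)
  qed
  have lim0: "((\<lambda>t. sqrt (V 0 * exp (- t / K))) \<longlongrightarrow> 0) at_top"
  proof -
    have "((\<lambda>t. V 0 * exp (- t / K)) \<longlongrightarrow> V 0 * 0) at_top"
      by (intro tendsto_mult tendsto_const exp_decay K)
    then have "((\<lambda>t. sqrt (V 0 * exp (- t / K))) \<longlongrightarrow> sqrt (V 0 * 0)) at_top"
      by (rule tendsto_real_sqrt)
    then show ?thesis by simp
  qed
  have "((\<lambda>t. norm (z t i - m)) \<longlongrightarrow> 0) at_top"
  proof (rule tendsto_sandwich[OF _ _ tendsto_const lim0])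
    show "\<forall>\<^sub>F t in at_top. 0 \<le> norm (z t i - m)" by simp
    show "\<forall>\<^sub>F t in at_top. norm (z t i - m) \<le> sqrt (V 0 * exp (- t / K))"
      using eventually_ge_at_top[of "0::real"] by (rule eventually_mono) (rule nb)
  qed
  then have "((\<lambda>t. z t i - m) \<longlongrightarrow> 0) at_top" by (simp add: tendsto_norm_zero_iff)
  then show ?thesis unfolding m_def by (simp add: LIM_zero_iff)
qed

theorem proposition3:
  fixes n lp :: nat and W :: "nat \<Rightarrow> nat \<Rightarrow> real^'d^'d" and \<sigma> :: "nat \<Rightarrow> nat"
    and S :: "nat \<Rightarrow> nat \<Rightarrow> real^'d^'d" and y :: "real \<Rightarrow> nat \<Rightarrow> real^'d"
  assumes "mwn n W" and "coherent n W"
    and "coherent_partition n W lp \<sigma>" and "part_trf n W lp \<sigma> S"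
    and "\<forall>t\<ge>0. \<forall>i\<in>{1..n}. ((\<lambda>s. y s i) has_vector_derivative
            (\<Sum>j=1..n. scaleR (wgt W i j) (trf W i j *v y t j - y t i))) (at t within {0..})"
  shows "\<forall>j\<in>{1..n}. ((\<lambda>t. y t j) \<longlongrightarrow>
            scaleR (1 / real n) (S (\<sigma> j) 1 *v (\<Sum>i=1..n. S 1 (\<sigma> i) *v y 0 i))) at_top"
proof (cases "n = 0")
  case True then show ?thesis by simp
next
  case False
  then have n: "n \<ge> 1" by simp
  note mw = assms(1)[unfolded mwn_def]
  have Wt: "\<And>i j. W i j = transpose (W j i)" using mw by blast
  have rngW: "\<And>a b. W a b \<noteq> 0 \<Longrightarrow> a \<in> {1..n} \<and> b \<in> {1..n}" using mw by blast
  have diag: "\<And>i. W i i = 0" using mw by blast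
  have rt: "\<And>i j. i \<in> {1..n} \<Longrightarrow> j \<in> {1..n} \<Longrightarrow> (i, j) \<in> {(a, b). W a b \<noteq> 0}\<^sup>*"
    using mw by blast
  have coh: "coherent n W" by fact
  have t0: "transpose (0::real^'d^'d) = 0" by (simp add: transpose_def vec_eq_iff)
  have symW: "W j i \<noteq> 0" if e: "W i j \<noteq> 0" for i j
  proof
    assume "W j i = 0"
    then have "W i j = 0" using Wt[of i j] t0 by simp
    then show False using e by simp
  qed
  have connS: "\<exists>p. wk n W p \<and> distinct p \<and> hd p = i \<and> last p = k"
    if i: "i \<in> {1..n}" and k: "k \<in> {1..n}" for i k
  proof -
    obtain p where "wk n W p" "hd p = i" "last p = k"
      using walk_exists[OF rt[OF i k] i] rngW by blast
    then show ?thesis using shorten[of n W p] by auto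
  qed
  note cp = assms(3)[unfolded coherent_partition_def]
  have img: "\<sigma> ` {1..n} = {1..lp}" using cp by blast
  have "\<sigma> 1 \<in> {1..lp}" using img n by auto
  then have lp: "1 \<in> {1..lp}" by auto
  then have "1 \<in> \<sigma> ` {1..n}" using img by simp
  then obtain r where r: "r \<in> {1..n}" "\<sigma> r = 1" by auto
  have pt: "\<And>h l ps. h \<in> {1..lp} \<Longrightarrow> l \<in> {1..lp} \<Longrightarrow> is_path n W ps \<Longrightarrow> \<sigma> (hd ps) = h \<Longrightarrow> \<sigma> (last ps) = l
        \<Longrightarrow> path_trf W ps = S h l"
    using assms(4) unfolding part_trf_def by blast
  define T where "T k = S 1 (\<sigma> k)" for k
  define U where "U k = S (\<sigma> k) 1" for k
  define P where "P k = (SOME p. wk n W p \<and> distinct p \<and> hd p = r \<and> last p = k)" for k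
  have P: "wk n W (P k) \<and> distinct (P k) \<and> hd (P k) = r \<and> last (P k) = k" if k: "k \<in> {1..n}" for k
    unfolding P_def using someI_ex[OF connS[OF r(1) k]] .
  have sk: "\<sigma> k \<in> {1..lp}" if k: "k \<in> {1..n}" for k using img k by blast
  have TP: "T k = path_trf W (P k)" if k: "k \<in> {1..n}" for k
  proof -
    have ip: "is_path n W (P k)" using P[OF k] is_path_wk by blast
    show ?thesis unfolding T_def using pt[OF lp sk[OF k] ip] P[OF k] r(2) by simp
  qed
  have UP: "U k = path_trf W (rev (P k))" if k: "k \<in> {1..n}" for k
  proof -
    have ne: "P k \<noteq> []" using P[OF k] wk_ne by blast
    have "is_path n W (rev (P k))" unfolding is_path_wk
      using P[OF k] wk_rev[OF symW] by auto
    moreover have "\<sigma> (hd (rev (P k))) = \<sigma> k" using P[OF k] ne by (simp add: hd_rev)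
    moreover have "\<sigma> (last (rev (P k))) = 1" using P[OF k] ne r by (simp add: last_rev)
    ultimately show ?thesis unfolding U_def using pt[OF sk[OF k] lp, of "rev (P k)"] by simp
  qed
  have UT: "U k ** T k = mat 1" if k: "k \<in> {1..n}" for k
  proof -
    have "T k ** U k = mat 1" using rev_inv[OF coh diag symW] P[OF k] TP[OF k] UP[OF k] by simp
    then show ?thesis using matrix_left_right_inverse by blast
  qed
  have edge: "T i ** trf W i j = T j" if i: "i \<in> {1..n}" and j: "j \<in> {1..n}" and e: "W i j \<noteq> 0" for i j
    using edge_trf[OF coh diag symW, of "P i" "P j" j] P[OF i] P[OF j] TP[OF i] TP[OF j] e j by simp
  define z where "z t k = T k *v y t k" for t k
  have zder: "((\<lambda>s. z s i) has_vector_derivative (\<Sum>j=1..n. wgt W i j *\<^sub>R (z t j - z t i))) (at t within {0..})"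
    if t: "t \<ge> 0" and i: "i \<in> {1..n}" for t i
  proof -
    have d: "((\<lambda>s. y s i) has_vector_derivative
            (\<Sum>j=1..n. scaleR (wgt W i j) (trf W i j *v y t j - y t i))) (at t within {0..})"
      using assms(5) t i by blast
    have "((\<lambda>s. T i *v y s i) has_vector_derivative
            T i *v (\<Sum>j=1..n. scaleR (wgt W i j) (trf W i j *v y t j - y t i))) (at t within {0..})"
      by (rule bounded_linear.has_vector_derivative[OF matrix_vector_mul_bounded_linear d])
    moreover have "T i *v (\<Sum>j=1..n. scaleR (wgt W i j) (trf W i j *v y t j - y t i))
        = (\<Sum>j=1..n. T i *v (scaleR (wgt W i j) (trf W i j *v y t j - y t i)))"
      by (rule linear_sum[OF bounded_linear.linear[OF matrix_vector_mul_bounded_linear]])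
    moreover have "(\<Sum>j=1..n. T i *v (scaleR (wgt W i j) (trf W i j *v y t j - y t i)))
        = (\<Sum>j=1..n. wgt W i j *\<^sub>R (z t j - z t i))"
    proof (rule sum.cong[OF refl])
      fix j assume j: "j \<in> {1..n}"
      show "T i *v (scaleR (wgt W i j) (trf W i j *v y t j - y t i)) = wgt W i j *\<^sub>R (z t j - z t i)"
      proof (cases "W i j = 0")
        case True then show ?thesis using wgt_zero[of W i j, OF True] by simp
      next
        case False
        have "T i *v (trf W i j *v y t j) = z t j"
          unfolding z_def matrix_vector_mul_assoc edge[OF i j False] ..
        then show ?thesis
          by (simp add: matrix_vector_mult_scaleR matrix_vector_mult_diff_distrib z_def)
      qed
    qed
    ultimately show ?thesis unfolding z_def by simp
  qed
  define E where "E = (\<lambda>(u, v). wgt W u v) ` {(u, v). u \<in> {1..n} \<and> v \<in> {1..n} \<and> W u v \<noteq> 0}"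
  define wmin where "wmin = Min (insert 1 E)"
  have finE: "finite E" unfolding E_def
    by (rule finite_imageI, rule finite_subset[of _ "{1..n} \<times> {1..n}"]) auto
  have wpos: "wmin > 0"
  proof -
    have "wmin \<in> insert 1 E" unfolding wmin_def using finE by (intro Min_in) auto
    moreover have "\<forall>e\<in>E. e > 0" unfolding E_def using wgt_pos by auto
    ultimately show ?thesis by auto
  qed
  have wle: "wmin \<le> wgt W u v" if e: "W u v \<noteq> 0" for u v
  proof -
    have "wgt W u v \<in> E" unfolding E_def using rngW[OF e] e by force
    then show ?thesis unfolding wmin_def using finE by (intro Min_le) auto
  qed
  have asym: "\<And>i j. wgt W i j = wgt W j i" using wgt_sym[OF coh diag Wt rngW] by blast
  have zc: "((\<lambda>t. z t k) \<longlongrightarrow> (1 / real n) *\<^sub>R (\<Sum>i=1..n. z 0 i)) at_top" if k: "k \<in> {1..n}" for k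
    using consensus[OF n wgt_nonneg asym connS wpos wle zder k] by blast
  show ?thesis
  proof
    fix j assume j: "j \<in> {1..n}"
    have yz: "y t j = U j *v z t j" for t
      unfolding z_def matrix_vector_mul_assoc UT[OF j] by simp
    have "((\<lambda>t. U j *v z t j) \<longlongrightarrow> U j *v ((1 / real n) *\<^sub>R (\<Sum>i=1..n. z 0 i))) at_top"
      by (rule bounded_linear.tendsto[OF matrix_vector_mul_bounded_linear zc[OF j]])
    then show "((\<lambda>t. y t j) \<longlongrightarrow>
            scaleR (1 / real n) (S (\<sigma> j) 1 *v (\<Sum>i=1..n. S 1 (\<sigma> i) *v y 0 i))) at_top"
      unfolding yz by (simp add: U_def z_def T_def matrix_vector_mult_scaleR)
  qed
qed

end
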